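(* Let $k$ be an algebraically closed field of characteristic $0$, $R=k[x,y]$, and let $L=(x^d,x^{d-1}y^{a_1},\dots,xy^{a_{d-1}},y^{a_d})$ with $0=a_0<a_1<\dots<a_d$ be a lex-segment ideal. If $L^2=(x^d,x^{d-i}y^{a_i},y^{a_d})L$ for some $i\in\{0,\dots,d\}$, then $\operatorname{depth}\operatorname{gr}_L(R)>0$.
   Context: $\operatorname{gr}_L(R)=\bigoplus_{n\ge0}L^n/L^{n+1}$. *)

theory Defs
  imports "HOL-Computational_Algebra.Polynomial"
begin

text \<open>The bivariate polynomial ring k[x,y] is modelled as (k[y])[x], i.e. the type
  'k poly poly; x is the outer variable and y the inner one.\<close>

definition varX :: "'k::comm_ring_1 poly poly" where
  "varX = monom 1 1"

definition varY :: "'k::comm_ring_1 poly poly" where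
  "varY = [: monom 1 1 :]"

definition ideal_gen :: "'a::comm_ring_1 set \<Rightarrow> 'a set" where
  "ideal_gen S = {z. \<exists>F c. finite F \<and> F \<subseteq> S \<and> z = (\<Sum>s\<in>F. c s * s)}"

definition ideal_prod :: "'a::comm_ring_1 set \<Rightarrow> 'a set \<Rightarrow> 'a set" where
  "ideal_prod I J = ideal_gen {a * b | a b. a \<in> I \<and> b \<in> J}"

primrec ideal_pow :: "'a::comm_ring_1 set \<Rightarrow> nat \<Rightarrow> 'a set" where
  "ideal_pow I 0 = UNIV"
| "ideal_pow I (Suc n) = ideal_prod I (ideal_pow I n)"

text \<open>The associated graded ring gr_L(R) = \<oplus>_n L^n/L^{n+1}, concretely.
  An element is represented by a sequence g with g n \<in> L^n, almost all g n = 0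
  (g n represents its class in L^n/L^{n+1}).\<close>
definition gr_elem :: "'a::comm_ring_1 set \<Rightarrow> (nat \<Rightarrow> 'a) \<Rightarrow> bool" where
  "gr_elem L g \<longleftrightarrow> (\<forall>n. g n \<in> ideal_pow L n) \<and> finite {n. g n \<noteq> 0}"

definition gr_zero :: "'a::comm_ring_1 set \<Rightarrow> (nat \<Rightarrow> 'a) \<Rightarrow> bool" where
  "gr_zero L g \<longleftrightarrow> (\<forall>n. g n \<in> ideal_pow L (Suc n))"

definition gr_mult :: "(nat \<Rightarrow> 'a::comm_ring_1) \<Rightarrow> (nat \<Rightarrow> 'a) \<Rightarrow> nat \<Rightarrow> 'a" where
  "gr_mult g h n = (\<Sum>i\<le>n. g i * h (n - i))"

text \<open>The maximal homogeneous ideal of gr_L(R) for R = k[x,y] and L (x,y)-primary: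
  (x,y)/L \<oplus> L/L^2 \<oplus> L^2/L^3 \<oplus> ...\<close>
definition gr_max_ideal :: "'k::comm_ring_1 poly poly set \<Rightarrow> (nat \<Rightarrow> 'k poly poly) set" where
  "gr_max_ideal L = {g. gr_elem L g \<and> g 0 \<in> ideal_gen {varX, varY}}"

text \<open>depth gr_L(R) > 0 (depth w.r.t. the maximal homogeneous ideal): this ideal contains
  a nonzerodivisor of gr_L(R).\<close>
definition gr_depth_pos :: "'k::comm_ring_1 poly poly set \<Rightarrow> bool" where
  "gr_depth_pos L \<longleftrightarrow> (\<exists>z \<in> gr_max_ideal L. \<forall>w. gr_elem L w \<longrightarrow>
       gr_zero L (gr_mult z w) \<longrightarrow> gr_zero L w)"

end

theory Submission
  imports Defs
begin

definition cf :: "'a::comm_ring_1 poly poly \<Rightarrow> nat \<Rightarrow> nat \<Rightarrow> 'a" where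
  "cf P p q = coeff (coeff P p) q"

definition cmono :: "'a::comm_ring_1 \<Rightarrow> nat \<Rightarrow> nat \<Rightarrow> 'a poly poly" where
  "cmono c p q = monom (monom c q) p"

abbreviation xym :: "nat \<Rightarrow> nat \<Rightarrow> 'a::comm_ring_1 poly poly" where
  "xym p q \<equiv> cmono 1 p q"

lemma cf_add [simp]: "cf (P + Q) p q = cf P p q + cf Q p q"
  by (simp add: cf_def)

lemma cf_0 [simp]: "cf 0 p q = 0"
  by (simp add: cf_def)

lemma cf_cmono: "cf (cmono c a b) p q = (if p = a \<and> q = b then c else 0)"
  by (simp add: cf_def cmono_def)

lemma cf_cmono_mult:
  "cf (cmono c a b * P) p q = (if a \<le> p \<and> b \<le> q then c * cf P (p - a) (q - b) else 0)"
  by (simp add: cf_def cmono_def coeff_monom_mult)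

lemma cmono_mult: "cmono c a b * cmono c' a' b' = cmono (c * c') (a + a') (b + b')"
  by (simp add: cmono_def mult_monom add.commute)

lemma varXY: "varX ^ p * varY ^ q = (xym p q :: 'a::comm_ring_1 poly poly)"
  by (simp add: varX_def varY_def cmono_def monom_power poly_const_pow monom_0[symmetric]
      mult_monom)

lemma cf_mult_nz:
  assumes "cf (P * Q) p q \<noteq> 0"
  shows "\<exists>p1 q1 p2 q2. p1 + p2 = p \<and> q1 + q2 = q \<and> cf P p1 q1 \<noteq> 0 \<and> cf Q p2 q2 \<noteq> 0"
proof -
  have "(\<Sum>i\<le>p. coeff (coeff P i * coeff Q (p - i)) q) \<noteq> 0"
    using assms by (simp add: cf_def coeff_mult coeff_sum)
  then obtain i where i: "i \<le> p" "coeff (coeff P i * coeff Q (p - i)) q \<noteq> 0"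
    by (meson atMost_iff sum.neutral)
  then have "(\<Sum>j\<le>q. coeff (coeff P i) j * coeff (coeff Q (p - i)) (q - j)) \<noteq> 0"
    by (simp add: coeff_mult)
  then obtain j where j: "j \<le> q" "coeff (coeff P i) j * coeff (coeff Q (p - i)) (q - j) \<noteq> 0"
    by (meson atMost_iff sum.neutral)
  show ?thesis
    by (rule exI[of _ i], rule exI[of _ j], rule exI[of _ "p - i"], rule exI[of _ "q - j"])
      (use i j in \<open>auto simp: cf_def\<close>)
qed

lemma poly_decomp:
  "P = (\<Sum>p\<le>degree P. \<Sum>q\<le>degree (coeff P p). cmono (cf P p q) p q)"
proof -
  have "P = (\<Sum>p\<le>degree P. monom (coeff P p) p)"
    by (simp add: poly_as_sum_of_monoms)
  also have "\<dots> = (\<Sum>p\<le>degree P. monom (\<Sum>q\<le>degree (coeff P p). monom (coeff (coeff P p) q) q) p)"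
    by (simp add: poly_as_sum_of_monoms)
  also have "\<dots> = (\<Sum>p\<le>degree P. \<Sum>q\<le>degree (coeff P p). cmono (cf P p q) p q)"
    by (simp add: monom_sum cmono_def cf_def)
  finally show ?thesis .
qed

subsection \<open>Ideal generation\<close>

lemma gen_in: "s \<in> S \<Longrightarrow> s \<in> ideal_gen S"
  unfolding ideal_gen_def
  by (rule CollectI, rule exI[of _ "{s}"], rule exI[of _ "\<lambda>_. 1"]) auto

lemma gen_zero: "0 \<in> ideal_gen S"
  unfolding ideal_gen_def by (rule CollectI, rule exI[of _ "{}"]) auto

lemma gen_mult: "a \<in> ideal_gen S \<Longrightarrow> r * a \<in> ideal_gen S"
proof -
  assume "a \<in> ideal_gen S"
  then obtain F c where F: "finite F" "F \<subseteq> S" "a = (\<Sum>s\<in>F. c s * s)"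
    unfolding ideal_gen_def by blast
  have "r * a = (\<Sum>s\<in>F. (r * c s) * s)"
    by (simp add: F(3) sum_distrib_left mult.assoc)
  then show ?thesis unfolding ideal_gen_def using F
    by (intro CollectI exI[of _ F] exI[of _ "\<lambda>s. r * c s"]) simp
qed

lemma gen_add: "a \<in> ideal_gen S \<Longrightarrow> b \<in> ideal_gen S \<Longrightarrow> a + b \<in> ideal_gen S"
proof -
  assume "a \<in> ideal_gen S" "b \<in> ideal_gen S"
  then obtain F c G e where F: "finite F" "F \<subseteq> S" "a = (\<Sum>s\<in>F. c s * s)"
    and G: "finite G" "G \<subseteq> S" "b = (\<Sum>s\<in>G. e s * s)"
    unfolding ideal_gen_def by blast
  define h where "h s = (if s \<in> F then c s else 0) + (if s \<in> G then e s else 0)" for s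
  have pw: "h s * s = (if s \<in> F then c s * s else 0) + (if s \<in> G then e s * s else 0)" for s
    by (simp add: h_def distrib_right)
  have "(\<Sum>s\<in>F \<union> G. h s * s) = (\<Sum>s\<in>F \<union> G. (if s \<in> F then c s * s else 0))
          + (\<Sum>s\<in>F \<union> G. (if s \<in> G then e s * s else 0))"
    by (simp only: pw sum.distrib)
  also have "(\<Sum>s\<in>F \<union> G. (if s \<in> F then c s * s else 0)) = a"
  proof -
    have "(F \<union> G) \<inter> F = F" by blast
    then show ?thesis using sum.inter_restrict[of "F \<union> G" "\<lambda>s. c s * s" F] F G by simp
  qed
  also have "(\<Sum>s\<in>F \<union> G. (if s \<in> G then e s * s else 0)) = b"
  proof -
    have "(F \<union> G) \<inter> G = G" by blast
    then show ?thesis using sum.inter_restrict[of "F \<union> G" "\<lambda>s. e s * s" G] F G by simp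
  qed
  finally have "a + b = (\<Sum>s\<in>F \<union> G. h s * s)" by simp
  then show ?thesis unfolding ideal_gen_def using F G
    by (intro CollectI exI[of _ "F \<union> G"] exI[of _ h]) simp
qed

lemma gen_sum: "(\<And>x. x \<in> A \<Longrightarrow> f x \<in> ideal_gen S) \<Longrightarrow> sum f A \<in> ideal_gen S"
  by (induction A rule: infinite_finite_induct) (auto simp: gen_zero gen_add)

lemma gen_least:
  assumes "S \<subseteq> I" "0 \<in> I" "\<And>a b. a \<in> I \<Longrightarrow> b \<in> I \<Longrightarrow> a + b \<in> I"
    "\<And>r a. a \<in> I \<Longrightarrow> r * a \<in> I"
  shows "ideal_gen S \<subseteq> I"
proof
  fix z assume "z \<in> ideal_gen S"
  then obtain F c where F: "finite F" "F \<subseteq> S" "z = (\<Sum>s\<in>F. c s * s)"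
    unfolding ideal_gen_def by blast
  have "(\<Sum>s\<in>F. c s * s) \<in> I" using F(1,2)
  proof (induction F rule: finite_induct)
    case empty then show ?case using assms(2) by simp
  next
    case (insert x F) then show ?case using assms by auto
  qed
  then show "z \<in> I" using F by simp
qed

subsection \<open>Monomial ideals\<close>

definition upc :: "(nat \<Rightarrow> nat \<Rightarrow> bool) \<Rightarrow> bool" where
  "upc S \<longleftrightarrow> (\<forall>p q p' q'. S p q \<longrightarrow> p \<le> p' \<longrightarrow> q \<le> q' \<longrightarrow> S p' q')"

definition MI :: "(nat \<Rightarrow> nat \<Rightarrow> bool) \<Rightarrow> 'a::comm_ring_1 poly poly set" where
  "MI S = {P. \<forall>p q. cf P p q \<noteq> 0 \<longrightarrow> S p q}"

lemma MI_zero: "0 \<in> MI S" by (simp add: MI_def)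

lemma MI_add: "P \<in> MI S \<Longrightarrow> Q \<in> MI S \<Longrightarrow> P + Q \<in> MI S"
proof -
  assume a: "P \<in> MI S" "Q \<in> MI S"
  show ?thesis unfolding MI_def
  proof (intro CollectI allI impI)
    fix p q assume "cf (P + Q) p q \<noteq> 0"
    then have "cf P p q \<noteq> 0 \<or> cf Q p q \<noteq> 0" by auto
    then show "S p q" using a by (auto simp: MI_def)
  qed
qed

lemma MI_mult:
  assumes "upc S" "P \<in> MI S" shows "R * P \<in> MI S"
  unfolding MI_def
proof (intro CollectI allI impI)
  fix p q assume "cf (R * P) p q \<noteq> 0"
  then obtain p1 q1 p2 q2 where "p1 + p2 = p" "q1 + q2 = q" "cf P p2 q2 \<noteq> 0"
    using cf_mult_nz by blast
  moreover then have "S p2 q2" using assms(2) unfolding MI_def by auto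
  ultimately show "S p q" using assms(1) unfolding upc_def by (metis le_add2)
qed

lemma mono_in_MI: "(xym p q :: 'a::comm_ring_1 poly poly) \<in> MI S \<longleftrightarrow> S p q"
  by (auto simp: MI_def cf_cmono)

lemma MI_sub_gen:
  assumes "\<And>p q. S p q \<Longrightarrow> (xym p q :: 'a::comm_ring_1 poly poly) \<in> ideal_gen G"
  shows "MI S \<subseteq> ideal_gen G"
proof
  fix P :: "'a poly poly" assume P: "P \<in> MI S"
  have "(\<Sum>p\<le>degree P. \<Sum>q\<le>degree (coeff P p). cmono (cf P p q) p q) \<in> ideal_gen G"
  proof (intro gen_sum)
    fix p q
    show "cmono (cf P p q) p q \<in> ideal_gen G"
    proof (cases "cf P p q = 0")
      case True then show ?thesis by (simp add: cmono_def gen_zero)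
    next
      case False
      then have "S p q" using P by (auto simp: MI_def)
      then have "cmono (cf P p q) 0 0 * xym p q \<in> ideal_gen G"
        by (intro gen_mult assms)
      then show ?thesis by (simp add: cmono_mult)
    qed
  qed
  then show "P \<in> ideal_gen G" using poly_decomp[of P] by simp
qed

lemma MI_eq:
  assumes "(MI A :: 'a::comm_ring_1 poly poly set) = MI B" shows "A = B"
proof (intro ext)
  fix p q
  have "(xym p q :: 'a poly poly) \<in> MI A \<longleftrightarrow> xym p q \<in> (MI B :: 'a poly poly set)"
    using assms by simp
  then show "A p q = B p q" by (simp add: mono_in_MI)
qed

lemma MI_UNIV: "MI (\<lambda>_ _. True) = UNIV" by (simp add: MI_def)

definition gset :: "(nat \<times> nat) set \<Rightarrow> nat \<Rightarrow> nat \<Rightarrow> bool" where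
  "gset Gs p q \<longleftrightarrow> (\<exists>ab\<in>Gs. fst ab \<le> p \<and> snd ab \<le> q)"

lemma upc_gset: "upc (gset Gs)"
  unfolding upc_def gset_def by (meson order_trans)

lemma gen_monos:
  "ideal_gen ((\<lambda>(a, b). xym a b) ` Gs) = (MI (gset Gs) :: 'a::comm_ring_1 poly poly set)"
proof
  show "ideal_gen ((\<lambda>(a, b). xym a b) ` Gs) \<subseteq> (MI (gset Gs) :: 'a poly poly set)"
  proof (rule gen_least)
    show "(\<lambda>(a, b). xym a b) ` Gs \<subseteq> (MI (gset Gs) :: 'a poly poly set)"
    proof
      fix z assume "z \<in> ((\<lambda>(a, b). xym a b) ` Gs :: 'a poly poly set)"
      then obtain a b where "(a, b) \<in> Gs" "z = xym a b" by auto
      moreover have "gset Gs a b" using \<open>(a, b) \<in> Gs\<close> unfolding gset_def by force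
      ultimately show "z \<in> MI (gset Gs)" by (simp add: mono_in_MI)
    qed
  qed (auto simp: MI_zero MI_add MI_mult upc_gset)
next
  show "(MI (gset Gs) :: 'a poly poly set) \<subseteq> ideal_gen ((\<lambda>(a, b). xym a b) ` Gs)"
  proof (rule MI_sub_gen)
    fix p q assume "gset Gs p q"
    then obtain a b where ab: "(a, b) \<in> Gs" "a \<le> p" "b \<le> q" by (force simp: gset_def)
    have "(xym (p - a) (q - b) :: 'a poly poly) * xym a b \<in> ideal_gen ((\<lambda>(a, b). xym a b) ` Gs)"
      by (intro gen_mult gen_in) (use ab in auto)
    then show "(xym p q :: 'a poly poly) \<in> ideal_gen ((\<lambda>(a, b). xym a b) ` Gs)"
      using ab by (simp add: cmono_mult)
  qed
qed

definition msum :: "(nat \<Rightarrow> nat \<Rightarrow> bool) \<Rightarrow> (nat \<Rightarrow> nat \<Rightarrow> bool) \<Rightarrow> nat \<Rightarrow> nat \<Rightarrow> bool" where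
  "msum A B p q \<longleftrightarrow> (\<exists>p1 q1 p2 q2. A p1 q1 \<and> B p2 q2 \<and> p1 + p2 \<le> p \<and> q1 + q2 \<le> q)"

lemma upc_msum: "upc (msum A B)"
  unfolding upc_def msum_def by (meson order_trans)

lemma prod_MI:
  assumes "upc A" "upc B"
  shows "ideal_prod (MI A) (MI B) = (MI (msum A B) :: 'a::comm_ring_1 poly poly set)"
proof
  show "ideal_prod (MI A) (MI B) \<subseteq> (MI (msum A B) :: 'a poly poly set)"
    unfolding ideal_prod_def
  proof (rule gen_least)
    show "{a * b |a b. a \<in> (MI A :: 'a poly poly set) \<and> b \<in> MI B} \<subseteq> MI (msum A B)"
    proof (clarsimp)
      fix a b :: "'a poly poly" assume ab: "a \<in> MI A" "b \<in> MI B"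
      show "a * b \<in> MI (msum A B)"
        unfolding MI_def
      proof (intro CollectI allI impI)
        fix p q assume "cf (a * b) p q \<noteq> 0"
        then obtain p1 q1 p2 q2 where "p1 + p2 = p" "q1 + q2 = q" "cf a p1 q1 \<noteq> 0" "cf b p2 q2 \<noteq> 0"
          using cf_mult_nz by blast
        then show "msum A B p q" using ab unfolding MI_def msum_def by fastforce
      qed
    qed
  qed (auto simp: MI_zero MI_add MI_mult upc_msum)
next
  show "(MI (msum A B) :: 'a poly poly set) \<subseteq> ideal_prod (MI A) (MI B)"
    unfolding ideal_prod_def
  proof (rule MI_sub_gen)
    fix p q assume "msum A B p q"
    then obtain p1 q1 p2 q2 where h: "A p1 q1" "B p2 q2" "p1 + p2 \<le> p" "q1 + q2 \<le> q"
      by (auto simp: msum_def)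
    have "(xym (p - p1 - p2) (q - q1 - q2) :: 'a poly poly) * (xym p1 q1 * xym p2 q2)
          \<in> ideal_gen {a * b |a b. a \<in> (MI A :: 'a poly poly set) \<and> b \<in> MI B}"
    proof (rule gen_mult, rule gen_in)
      have "(xym p1 q1 :: 'a poly poly) \<in> MI A" "(xym p2 q2 :: 'a poly poly) \<in> MI B"
        using h by (auto simp: mono_in_MI)
      then show "(xym p1 q1 :: 'a poly poly) * xym p2 q2 \<in> {a * b |a b. a \<in> MI A \<and> b \<in> MI B}"
        by blast
    qed
    then show "xym p q \<in> ideal_gen {a * b |a b. a \<in> (MI A :: 'a poly poly set) \<and> b \<in> MI B}"
      using h by (simp add: cmono_mult)
  qed
qed


context
  fixes d e c D :: nat and Ep :: "nat \<Rightarrow> nat \<Rightarrow> bool"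
begin

definition Zm :: "nat \<Rightarrow> nat \<Rightarrow> nat \<Rightarrow> bool" where
  "Zm k p q \<longleftrightarrow> (\<exists>\<alpha> \<beta> \<gamma> s t. \<alpha> + \<beta> + \<gamma> = k \<and> Ep s t \<and>
      s + \<alpha> * d + \<beta> * e \<le> p \<and> t + \<beta> * c + \<gamma> * D \<le> q)"

lemma ZmI: "\<alpha> + \<beta> + \<gamma> = k \<Longrightarrow> Ep s t \<Longrightarrow> s + \<alpha> * d + \<beta> * e \<le> p \<Longrightarrow>
    t + \<beta> * c + \<gamma> * D \<le> q \<Longrightarrow> Zm k p q"
  unfolding Zm_def by blast

lemma upc_Zm: "upc (Zm k)"
  unfolding upc_def
proof (intro allI impI)
  fix p q p' q' assume "Zm k p q" "p \<le> p'" "q \<le> q'"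
  then obtain \<alpha> \<beta> \<gamma> s t where h: "\<alpha> + \<beta> + \<gamma> = k" "Ep s t"
      "s + \<alpha> * d + \<beta> * e \<le> p" "t + \<beta> * c + \<gamma> * D \<le> q" unfolding Zm_def by blast
  show "Zm k p' q'" by (rule ZmI[of \<alpha> \<beta> \<gamma> _ s t]) (use h \<open>p \<le> p'\<close> \<open>q \<le> q'\<close> in auto)
qed

lemma Zm_u: "Zm k p q \<Longrightarrow> Zm (Suc k) (p + d) q"
proof -
  assume "Zm k p q"
  then obtain \<alpha> \<beta> \<gamma> s t where h: "\<alpha> + \<beta> + \<gamma> = k" "Ep s t"
      "s + \<alpha> * d + \<beta> * e \<le> p" "t + \<beta> * c + \<gamma> * D \<le> q" unfolding Zm_def by blast
  show ?thesis by (rule ZmI[of "Suc \<alpha>" \<beta> \<gamma> _ s t]) (use h in auto)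
qed

lemma Zm_w: "Zm k p q \<Longrightarrow> Zm (Suc k) p (q + D)"
proof -
  assume "Zm k p q"
  then obtain \<alpha> \<beta> \<gamma> s t where h: "\<alpha> + \<beta> + \<gamma> = k" "Ep s t"
      "s + \<alpha> * d + \<beta> * e \<le> p" "t + \<beta> * c + \<gamma> * D \<le> q" unfolding Zm_def by blast
  show ?thesis by (rule ZmI[of \<alpha> \<beta> "Suc \<gamma>" _ s t]) (use h in auto)
qed

lemma run_lemma:
  assumes Eu: "Ep d 0" and Ev: "Ep e c" and Ew: "Ep 0 D"
    and Q0: "Zm (Suc n) p (q' + K * D + D)" and QK: "Zm (Suc n) (p + K * d + d) q'"
    and P0: "\<not> Zm n p (q' + K * D)" and PK: "\<not> Zm n (p + K * d) q'"
  shows False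
proof -
  obtain a1 b1 g1 s1 t1 where h1: "a1 + b1 + g1 = Suc n" "Ep s1 t1"
      "s1 + a1 * d + b1 * e \<le> p" "t1 + b1 * c + g1 * D \<le> q' + K * D + D"
    using Q0 unfolding Zm_def by blast
  obtain a2 b2 g2 s2 t2 where h2: "a2 + b2 + g2 = Suc n" "Ep s2 t2"
      "s2 + a2 * d + b2 * e \<le> p + K * d + d" "t2 + b2 * c + g2 * D \<le> q'"
    using QK unfolding Zm_def by blast
  show False
  proof (cases "b1 \<le> b2")
    case True
    have bc: "b1 * c \<le> b2 * c" using True by (simp add: mult_right_mono)
    show False
    proof (cases g1)
      case (Suc g)
      have "Zm n p (q' + K * D)"
        by (rule ZmI[of a1 b1 g _ s1 t1]) (use h1 Suc in auto)
      then show False using P0 by simp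
    next
      case 0
      show False
      proof (cases a1)
        case (Suc a)
        have bcq: "b1 * c \<le> q' + K * D" using bc h2(4) by linarith
        have "Zm n p (q' + K * D)"
          by (rule ZmI[of a b1 0 _ d 0]) (use h1 Suc 0 Eu bcq in auto)
        then show False using P0 by simp
      next
        case a0: 0
        have b1n: "b1 = Suc n" using h1 0 a0 by simp
        have "Suc n * c \<le> b2 * c" using bc b1n by simp
        then have "Zm n p (q' + K * D)"
          by (intro ZmI[of 0 n 0 _ e c]) (use h1 b1n h2 Ev in auto)
        then show False using P0 by simp
      qed
    qed
  next
    case False
    have be: "b2 * e \<le> b1 * e" using False by (simp add: mult_right_mono)
    show False
    proof (cases a2)
      case (Suc a)
      have "Zm n (p + K * d) q'"
        by (rule ZmI[of a b2 g2 _ s2 t2]) (use h2 Suc in auto)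
      then show False using PK by simp
    next
      case 0
      show False
      proof (cases g2)
        case (Suc g)
        have bep: "b2 * e \<le> p + K * d" using be h1(3) by linarith
        have "Zm n (p + K * d) q'"
          by (rule ZmI[of 0 b2 g _ 0 D]) (use h2 Suc 0 Ew bep in auto)
        then show False using PK by simp
      next
        case g0: 0
        then show False using h2 h1 0 False by simp
      qed
    qed
  qed
qed


lemma Zm0: "upc Ep \<Longrightarrow> Zm 0 = Ep"
proof (intro ext iffI)
  fix p q assume "upc Ep" "Zm 0 p q"
  then show "Ep p q" unfolding Zm_def upc_def by auto
next
  fix p q assume "Ep p q"
  then show "Zm 0 p q" by (intro ZmI[of 0 0 0 _ p q]) auto
qed

lemma msum_Zm:
  assumes up: "upc Ep"
    and HE: "msum Ep Ep = msum (gset {(d, 0), (e, c), (0, D)}) Ep"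
  shows "msum Ep (Zm k) = Zm (Suc k)"
proof (intro ext iffI)
  fix p q assume "msum Ep (Zm k) p q"
  then obtain p1 q1 p2 q2 where m: "Ep p1 q1" "Zm k p2 q2" "p1 + p2 \<le> p" "q1 + q2 \<le> q"
    unfolding msum_def by blast
  then obtain \<alpha> \<beta> \<gamma> s t where h: "\<alpha> + \<beta> + \<gamma> = k" "Ep s t"
      "s + \<alpha> * d + \<beta> * e \<le> p2" "t + \<beta> * c + \<gamma> * D \<le> q2" unfolding Zm_def by blast
  have "msum Ep Ep (p1 + s) (q1 + t)" unfolding msum_def using m h by blast
  then have "msum (gset {(d, 0), (e, c), (0, D)}) Ep (p1 + s) (q1 + t)" using HE by simp
  then obtain x1 y1 x2 y2 where g: "gset {(d, 0), (e, c), (0, D)} x1 y1" "Ep x2 y2"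
      "x1 + x2 \<le> p1 + s" "y1 + y2 \<le> q1 + t" unfolding msum_def by blast
  from g(1) have "(d \<le> x1) \<or> (e \<le> x1 \<and> c \<le> y1) \<or> (D \<le> y1)" unfolding gset_def by auto
  then show "Zm (Suc k) p q"
  proof (elim disjE conjE)
    assume "d \<le> x1"
    show ?thesis by (rule ZmI[of "Suc \<alpha>" \<beta> \<gamma> _ x2 y2]) (use h g m \<open>d \<le> x1\<close> in auto)
  next
    assume "e \<le> x1" "c \<le> y1"
    show ?thesis by (rule ZmI[of \<alpha> "Suc \<beta>" \<gamma> _ x2 y2]) (use h g m \<open>e \<le> x1\<close> \<open>c \<le> y1\<close> in auto)
  next
    assume "D \<le> y1"
    show ?thesis by (rule ZmI[of \<alpha> \<beta> "Suc \<gamma>" _ x2 y2]) (use h g m \<open>D \<le> y1\<close> in auto)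
  qed
next
  fix p q assume "Zm (Suc k) p q"
  then obtain \<alpha> \<beta> \<gamma> s t where h: "\<alpha> + \<beta> + \<gamma> = Suc k" "Ep s t"
      "s + \<alpha> * d + \<beta> * e \<le> p" "t + \<beta> * c + \<gamma> * D \<le> q" unfolding Zm_def by blast
  have key: "\<exists>x1 y1 x2 y2. Ep x1 y1 \<and> Ep x2 y2 \<and> x1 + x2 \<le> s + g1 \<and> y1 + y2 \<le> t + g2"
    if "(g1, g2) \<in> {(d, 0), (e, c), (0, D)}" for g1 g2
  proof -
    have "gset {(d, 0), (e, c), (0, D)} g1 g2" using that unfolding gset_def by force
    then have "msum (gset {(d, 0), (e, c), (0, D)}) Ep (s + g1) (t + g2)"
      unfolding msum_def using h(2) by fastforce
    then have "msum Ep Ep (s + g1) (t + g2)" using HE by simp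
    then show ?thesis unfolding msum_def by blast
  qed
  consider (u) a where "\<alpha> = Suc a" | (v) b where "\<beta> = Suc b" | (w) g where "\<gamma> = Suc g"
    using h(1) by (metis add_is_0 not0_implies_Suc old.nat.distinct(1))
  then show "msum Ep (Zm k) p q"
  proof cases
    case u
    obtain x1 y1 x2 y2 where k: "Ep x1 y1" "Ep x2 y2" "x1 + x2 \<le> s + d" "y1 + y2 \<le> t + 0"
      using key[of d 0] by auto
    have "Zm k (p - x1) (q - y1)"
      by (rule ZmI[of a \<beta> \<gamma> _ x2 y2]) (use h k u in auto)
    moreover have "x1 \<le> p" "y1 \<le> q" using h k u by auto
    ultimately show ?thesis unfolding msum_def using k(1)
      by (intro exI[of _ x1] exI[of _ y1] exI[of _ "p - x1"] exI[of _ "q - y1"]) auto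
  next
    case v
    obtain x1 y1 x2 y2 where k: "Ep x1 y1" "Ep x2 y2" "x1 + x2 \<le> s + e" "y1 + y2 \<le> t + c"
      using key[of e c] by auto
    have "Zm k (p - x1) (q - y1)"
      by (rule ZmI[of \<alpha> b \<gamma> _ x2 y2]) (use h k v in auto)
    moreover have "x1 \<le> p" "y1 \<le> q" using h k v by auto
    ultimately show ?thesis unfolding msum_def using k(1)
      by (intro exI[of _ x1] exI[of _ y1] exI[of _ "p - x1"] exI[of _ "q - y1"]) auto
  next
    case w
    obtain x1 y1 x2 y2 where k: "Ep x1 y1" "Ep x2 y2" "x1 + x2 \<le> s + 0" "y1 + y2 \<le> t + D"
      using key[of 0 D] by auto
    have "Zm k (p - x1) (q - y1)"
      by (rule ZmI[of \<alpha> \<beta> g _ x2 y2]) (use h k w in auto)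
    moreover have "x1 \<le> p" "y1 \<le> q" using h k w by auto
    ultimately show ?thesis unfolding msum_def using k(1)
      by (intro exI[of _ x1] exI[of _ y1] exI[of _ "p - x1"] exI[of _ "q - y1"]) auto
  qed
qed


lemma cf_f_mult:
  "cf ((xym d 0 + xym 0 D) * (W :: 'a::comm_ring_1 poly poly)) p q =
     (if d \<le> p then cf W (p - d) q else 0) + (if D \<le> q then cf W p (q - D) else 0)"
  by (simp add: distrib_right cf_cmono_mult)

lemma chain_lemma:
  fixes W :: "'a::comm_ring_1 poly poly"
  assumes d1: "1 \<le> d" and D1: "1 \<le> D"
    and Eu: "Ep d 0" and Ev: "Ep e c" and Ew: "Ep 0 D"
    and H: "\<And>p q. cf ((xym d 0 + xym 0 D) * W) p q \<noteq> 0 \<Longrightarrow> Zm (Suc n) p q"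
  shows "cf W p q \<noteq> 0 \<Longrightarrow> Zm n p q"
proof (rule ccontr)
  assume "cf W p q \<noteq> 0" "\<not> Zm n p q"
  define bad where "bad p q \<longleftrightarrow> cf W p q \<noteq> 0 \<and> \<not> Zm n p q" for p q
  have ex: "\<exists>q. bad p q" using \<open>cf W p q \<noteq> 0\<close> \<open>\<not> Zm n p q\<close> bad_def by blast
  define p0 where "p0 = (LEAST p. \<exists>q. bad p q)"
  obtain q0 where b0: "bad p0 q0" using LeastI_ex[of "\<lambda>p. \<exists>q. bad p q"] ex p0_def by blast
  have minp: "\<not> bad p' q'" if "p' < p0" for p' q'
    using not_less_Least[of p' "\<lambda>p. \<exists>q. bad p q"] that p0_def by blast
  have cfW: "cf ((xym d 0 + xym 0 D) * W) p q = (if d \<le> p then cf W (p - d) q else 0) + (if D \<le> q then cf W p (q - D) else 0)" for p q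
    by (rule cf_f_mult)
  have Q0: "Zm (Suc n) p0 (q0 + D)"
  proof (rule ccontr)
    assume nQ: "\<not> Zm (Suc n) p0 (q0 + D)"
    then have "cf ((xym d 0 + xym 0 D) * W) p0 (q0 + D) = 0" using H by blast
    moreover have "(if d \<le> p0 then cf W (p0 - d) (q0 + D) else 0) = 0"
    proof (cases "d \<le> p0")
      case True
      have "cf W (p0 - d) (q0 + D) = 0"
      proof (rule ccontr)
        assume nz: "cf W (p0 - d) (q0 + D) \<noteq> 0"
        have "p0 - d < p0" using True d1 by linarith
        then have "Zm n (p0 - d) (q0 + D)" using minp nz bad_def by blast
        then have "Zm (Suc n) (p0 - d + d) (q0 + D)" by (rule Zm_u)
        then show False using nQ True by simp
      qed
      then show ?thesis by simp
    qed simp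
    ultimately have "cf W p0 q0 = 0" using cfW[of p0 "q0 + D"] by simp
    then show False using b0 bad_def by simp
  qed
  have notQK: "\<not> Zm (Suc n) (p0 + k * d + d) (q0 - k * D)"
    if "k * D \<le> q0" "\<not> Zm n (p0 + k * d) (q0 - k * D)" for k
  proof
    assume "Zm (Suc n) (p0 + k * d + d) (q0 - k * D)"
    show False
    proof (rule run_lemma[OF Eu Ev Ew, of n p0 "q0 - k * D" k])
      show "Zm (Suc n) p0 (q0 - k * D + k * D + D)" using Q0 that by simp
      show "Zm (Suc n) (p0 + k * d + d) (q0 - k * D)" by fact
      show "\<not> Zm n p0 (q0 - k * D + k * D)" using b0 bad_def that by simp
      show "\<not> Zm n (p0 + k * d) (q0 - k * D)" by fact
    qed
  qed
  have C: "cf W (p0 + k * d) (q0 - k * D) \<noteq> 0 \<and> \<not> Zm n (p0 + k * d) (q0 - k * D)"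
    if "k * D \<le> q0" for k
    using that
  proof (induction k)
    case 0
    then show ?case using b0 bad_def by simp
  next
    case (Suc k)
    have kD: "k * D \<le> q0" using Suc.prems by simp
    have IH: "cf W (p0 + k * d) (q0 - k * D) \<noteq> 0" "\<not> Zm n (p0 + k * d) (q0 - k * D)"
      using Suc.IH kD by auto
    have nQK: "\<not> Zm (Suc n) (p0 + k * d + d) (q0 - k * D)" using notQK kD IH(2) by blast
    then have z: "cf ((xym d 0 + xym 0 D) * W) (p0 + k * d + d) (q0 - k * D) = 0" using H by blast
    have DD: "D \<le> q0 - k * D" using Suc.prems by simp
    have e1: "q0 - k * D - D = q0 - Suc k * D" by simp
    have e2: "p0 + k * d + d = p0 + Suc k * d" by simp
    have "cf W (p0 + k * d) (q0 - k * D) + cf W (p0 + Suc k * d) (q0 - Suc k * D) = 0"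
      using z cfW[of "p0 + k * d + d" "q0 - k * D"] DD e1 e2 by simp
    then have c1: "cf W (p0 + Suc k * d) (q0 - Suc k * D) \<noteq> 0" using IH(1)
      by (metis add.right_neutral add_left_cancel)
    have c2: "\<not> Zm n (p0 + Suc k * d) (q0 - Suc k * D)"
    proof
      assume "Zm n (p0 + Suc k * d) (q0 - Suc k * D)"
      then have "Zm (Suc n) (p0 + Suc k * d) (q0 - Suc k * D + D)" by (rule Zm_w)
      moreover have "q0 - Suc k * D + D = q0 - k * D" using Suc.prems by simp
      ultimately show False using nQK e2 by simp
    qed
    show ?case using c1 c2 by simp
  qed
  define K where "K = q0 div D"
  have KD: "K * D \<le> q0" unfolding K_def by (simp add: div_times_less_eq_dividend)
  have small: "q0 - K * D < D" unfolding K_def using D1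
    by (metis minus_div_mult_eq_mod mod_less_divisor not_one_le_zero zero_less_iff_neq_zero)
  have CK: "cf W (p0 + K * d) (q0 - K * D) \<noteq> 0" "\<not> Zm n (p0 + K * d) (q0 - K * D)"
    using C[OF KD] by auto
  have nQK: "\<not> Zm (Suc n) (p0 + K * d + d) (q0 - K * D)" using notQK KD CK(2) by blast
  have "cf ((xym d 0 + xym 0 D) * W) (p0 + K * d + d) (q0 - K * D) = cf W (p0 + K * d) (q0 - K * D)"
    using cfW[of "p0 + K * d + d" "q0 - K * D"] small by simp
  then have "cf ((xym d 0 + xym 0 D) * W) (p0 + K * d + d) (q0 - K * D) \<noteq> 0" using CK by simp
  then show False using H nQK by blast
qed

end


lemma varX_mono: "(varX ^ p :: 'a::comm_ring_1 poly poly) = xym p 0"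
  using varXY[of p 0, where 'a='a] by simp

lemma varY_mono: "(varY ^ q :: 'a::comm_ring_1 poly poly) = xym 0 q"
  using varXY[of 0 q, where 'a='a] by simp

lemma a_ge:
  assumes "a 0 = 0" "\<And>j. j < d \<Longrightarrow> a j < a (Suc j)"
  shows "j \<le> d \<Longrightarrow> j \<le> a j"
proof (induction j)
  case 0 then show ?case by simp
next
  case (Suc j)
  then have "a j < a (Suc j)" using assms(2) by simp
  then show ?case using Suc by simp
qed

theorem proposition4p1:
  fixes d i :: nat and a :: "nat \<Rightarrow> nat" and L :: "'k::{alg_closed_field, field_char_0} poly poly set"
  assumes "a 0 = 0"
    and "\<And>j. j < d \<Longrightarrow> a j < a (Suc j)"
    and "L = ideal_gen {varX ^ (d - j) * varY ^ (a j) | j. j \<le> d}"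
    and "i \<le> d"
    and "ideal_pow L 2 = ideal_prod (ideal_gen {varX ^ d, varX ^ (d - i) * varY ^ (a i), varY ^ (a d)}) L"
  shows "gr_depth_pos L"
proof -
  define e where "e = d - i"
  define c where "c = a i"
  define D where "D = a d"
  define Gl where "Gl = (\<lambda>j. (d - j, a j)) ` {..d}"
  define Ep where "Ep = gset Gl"
  define EJ where "EJ = gset {(d, 0), (e, c), (0, D)}"
  have Ep_iff: "Ep p q \<longleftrightarrow> (\<exists>j\<le>d. d - j \<le> p \<and> a j \<le> q)" for p q
    unfolding Ep_def gset_def Gl_def by auto
  have upE: "upc Ep" unfolding Ep_def by (rule upc_gset)
  have Eu: "Ep d 0" using Ep_iff[of d 0] assms(1) by auto
  have Ev: "Ep e c" using Ep_iff[of e c] assms(4) unfolding e_def c_def by auto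
  have Ew: "Ep 0 D" using Ep_iff[of 0 D] unfolding D_def by auto
  have LMI: "L = MI Ep"
  proof -
    have "{varX ^ (d - j) * varY ^ (a j) | j. j \<le> d} = ((\<lambda>(x, y). xym x y) ` Gl :: 'k poly poly set)"
      unfolding Gl_def by (auto simp: varXY image_iff)
    then show ?thesis using assms(3) gen_monos[of Gl] unfolding Ep_def by simp
  qed
  have JMI: "ideal_gen {varX ^ d, varX ^ (d - i) * varY ^ (a i), varY ^ (a d)} = (MI EJ :: 'k poly poly set)"
  proof -
    have "{varX ^ d, varX ^ (d - i) * varY ^ (a i), varY ^ (a d)} =
          ((\<lambda>(x, y). xym x y) ` {(d, 0), (e, c), (0, D)} :: 'k poly poly set)"
      unfolding e_def c_def D_def by (simp only: varXY, simp add: varX_mono varY_mono)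
    then show ?thesis using gen_monos[of "{(d, 0), (e, c), (0, D)}"] unfolding EJ_def by simp
  qed
  have msumT: "msum Ep (\<lambda>_ _. True) = Ep"
  proof (intro ext iffI)
    fix p q assume "msum Ep (\<lambda>_ _. True) p q"
    then show "Ep p q" using upE unfolding msum_def upc_def by (meson le_add1 order_trans)
  next
    fix p q assume "Ep p q" then show "msum Ep (\<lambda>_ _. True) p q"
      unfolding msum_def by (intro exI[of _ p] exI[of _ q] exI[of _ 0]) auto
  qed
  have upT: "upc (\<lambda>_ _. True)" unfolding upc_def by simp
  have pow1: "ideal_pow L 1 = (MI Ep :: 'k poly poly set)"
    using prod_MI[OF upE upT, where 'a='k] by (simp add: LMI MI_UNIV[symmetric] msumT)
  have HE: "msum Ep Ep = msum EJ Ep"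
  proof -
    have "ideal_pow L 2 = ideal_prod L (ideal_pow L 1)" by (simp add: numeral_2_eq_2)
    also have "\<dots> = (MI (msum Ep Ep) :: 'k poly poly set)"
      using prod_MI[OF upE upE, where 'a='k] by (subst pow1) (simp add: LMI)
    finally have 1: "ideal_pow L 2 = (MI (msum Ep Ep) :: 'k poly poly set)" .
    have "ideal_prod (ideal_gen {varX ^ d, varX ^ (d - i) * varY ^ (a i), varY ^ (a d)}) L
          = (MI (msum EJ Ep) :: 'k poly poly set)"
      using prod_MI[OF _ upE, of EJ, where 'a='k] by (simp add: JMI LMI EJ_def upc_gset)
    then have "(MI (msum Ep Ep) :: 'k poly poly set) = MI (msum EJ Ep)" using 1 assms(5) by simp
    then show ?thesis by (rule MI_eq)
  qed
  have pow: "ideal_pow L (Suc k) = (MI (Zm d e c D Ep k) :: 'k poly poly set)" for k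
  proof (induction k)
    case 0 then show ?case using pow1 Zm0[OF upE] by simp
  next
    case (Suc k)
    have "ideal_pow L (Suc (Suc k)) = ideal_prod L (ideal_pow L (Suc k))" by simp
    also have "\<dots> = ideal_prod (MI Ep) (MI (Zm d e c D Ep k))"
      by (subst Suc.IH) (simp only: LMI)
    also have "\<dots> = (MI (msum Ep (Zm d e c D Ep k)) :: 'k poly poly set)"
      by (rule prod_MI[OF upE upc_Zm])
    also have "\<dots> = MI (Zm d e c D Ep (Suc k))"
      using msum_Zm[OF upE] HE unfolding EJ_def by simp
    finally show ?case .
  qed
  define f :: "'k poly poly" where "f = xym d 0 + xym 0 D"
  define z :: "nat \<Rightarrow> 'k poly poly" where "z n = (if n = 1 then f else 0)" for n
  have zero_pow: "(0 :: 'k poly poly) \<in> ideal_pow L n" for n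
  proof (cases n)
    case (Suc m) then show ?thesis using pow[of m] by (simp only: MI_zero)
  qed simp
  have f_in: "f \<in> ideal_pow L 1"
  proof -
    have "f \<in> MI Ep" unfolding MI_def f_def
      using Eu Ew by (auto simp: cf_cmono split: if_splits)
    then show ?thesis using pow1 by simp
  qed
  have z_gr: "gr_elem L z"
    unfolding gr_elem_def
  proof
    show "\<forall>n. z n \<in> ideal_pow L n" using f_in zero_pow by (simp add: z_def)
    have "{n. z n \<noteq> 0} \<subseteq> {1}" by (auto simp: z_def)
    then show "finite {n. z n \<noteq> 0}" using finite_subset by blast
  qed
  have z_max: "z \<in> gr_max_ideal L"
    unfolding gr_max_ideal_def using z_gr by (simp add: z_def gen_zero)
  have mult_z: "gr_mult z w (Suc n) = f * w n" for w :: "nat \<Rightarrow> 'k poly poly" and n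
  proof -
    have "gr_mult z w (Suc n) = (\<Sum>j\<le>Suc n. if j = 1 then f * w (Suc n - 1) else 0)"
      unfolding gr_mult_def z_def by (intro sum.cong) auto
    also have "\<dots> = f * w n" by simp
    finally show ?thesis .
  qed
  show ?thesis
    unfolding gr_depth_pos_def
  proof (intro bexI[OF _ z_max] allI impI)
    fix w assume "gr_elem L w" "gr_zero L (gr_mult z w)"
    show "gr_zero L w"
      unfolding gr_zero_def
    proof
      fix n
      have "gr_mult z w (Suc n) \<in> ideal_pow L (Suc (Suc n))"
        using \<open>gr_zero L (gr_mult z w)\<close> unfolding gr_zero_def by blast
      then have fw: "f * w n \<in> MI (Zm d e c D Ep (Suc n))" by (simp only: mult_z pow)
      have "w n \<in> MI (Zm d e c D Ep n)"
        unfolding MI_def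
      proof (intro CollectI allI impI)
        fix p q assume nz: "cf (w n) p q \<noteq> 0"
        show "Zm d e c D Ep n p q"
        proof (cases "d = 0")
          case True
          show ?thesis by (rule ZmI[of n 0 0 _ _ 0 0]) (use Eu True in auto)
        next
          case False
          have "d \<le> a d" using a_ge[OF assms(1,2)] by blast
          then have D1: "1 \<le> D" using False unfolding D_def by simp
          show ?thesis
          proof (rule chain_lemma[where W = "w n"])
            show "1 \<le> d" using False by simp
            show "1 \<le> D" by fact
            show "Ep d 0" "Ep e c" "Ep 0 D" by fact+
            show "cf ((xym d 0 + xym 0 D) * w n) p q \<noteq> 0 \<Longrightarrow> Zm d e c D Ep (Suc n) p q" for p q
              using fw unfolding MI_def f_def by blast
            show "cf (w n) p q \<noteq> 0" by fact
          qed
        qed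
      qed
      then show "w n \<in> ideal_pow L (Suc n)" by (simp only: pow)
    qed
  qed
qed

end
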